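(* Let $G$ be a simple undirected graph with adjacency matrix $A$, and let $0<\tau<\tau_c^{(1)}(G)$, so that $R_0(G,\tau)=\tau\lambda_1(A)<1$. Then for every initial condition $V(0)\in[0,1]^N$ and every $t\ge 0$, $$y(t;G,\tau,V(0)) \le y(t;G,\tau,u) \le e^{(R_0(G,\tau)-1)t}.$$ Consequently, for every $r\in(0,1)$, the upper-transition time satisfies $$\overline{T}(r)\le \frac{1}{1-R_0(G,\tau)}\log\left(\frac1r\right).$$
   Context: NIMFA SIS process (time rescaled so that the curing rate is $1$): for a simple undirected graph with $N\times N$ symmetric $0/1$ adjacency matrix $A$ (zero diagonal) and effective infection rate $\tau>0$, the infection probabilities $v_i(t)\in[0,1]$ evolve by $\frac{dv_i}{dt} = -v_i + \tau(1-v_i)\sum_{j=1}^N a_{ij}v_j$, $i=1,\dots,N$, with initial condition $V(0)\in[0,1]^N$. $y(t;G,\tau,V(0))=\frac1N\sum_i v_i(t)$ denotes the prevalence of this process. $u$ is the all-one vector. $\lambda_1(A)$ is the largest eigenvalue of $A$, $\tau_c^{(1)}(G)=1/\lambda_1(A)$, and $R_0(G,\tau)=\tau\lambda_1(A)$. When $\tau\le\tau_c^{(1)}(G)$ the steady-state prevalence is $y_\infty=0$. The upper-transition time is $\overline{T}(r)=\min\{t\ge 0: |y(t;G,\tau,V(0))-y_\infty|\le r \text{ for all } V(0) \text{ with } v_i(0)\in[r,1]\ \forall i\}$. *)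

theory Defs
  imports "HOL-Analysis.Analysis"
begin

text \<open>Vertices are indexed by a finite type 'n, so N = CARD('n).
  The adjacency matrix is a real matrix of type real^'n^'n.\<close>

definition simple_graph_adj :: "real^'n^'n \<Rightarrow> bool" where
  "simple_graph_adj A \<longleftrightarrow>
     (\<forall>i j. A $ i $ j = A $ j $ i) \<and>
     (\<forall>i j. A $ i $ j = 0 \<or> A $ i $ j = 1) \<and>
     (\<forall>i. A $ i $ i = 0)"

definition lambda1 :: "real^'n^'n \<Rightarrow> real" where
  "lambda1 A = Max {l. \<exists>x. x \<noteq> 0 \<and> A *v x = l *\<^sub>R x}"

definition R0 :: "real^'n^'n \<Rightarrow> real \<Rightarrow> real" where
  "R0 A tau = tau * lambda1 A"

definition nimfa_solution :: "real^'n^'n \<Rightarrow> real \<Rightarrow> real^'n \<Rightarrow> (real \<Rightarrow> real^'n) \<Rightarrow> bool" where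
  "nimfa_solution A tau V0 v \<longleftrightarrow>
     v 0 = V0 \<and>
     (\<forall>t\<ge>0. \<forall>i. ((\<lambda>s. v s $ i) has_real_derivative
         (- v t $ i + tau * (1 - v t $ i) * (\<Sum>j\<in>UNIV. A $ i $ j * v t $ j)))
         (at t within {0..}))"

definition prevalence :: "(real \<Rightarrow> real^'n) \<Rightarrow> real \<Rightarrow> real" where
  "prevalence v t = (\<Sum>i\<in>UNIV. v t $ i) / real CARD('n)"

definition unit_cube :: "real \<Rightarrow> (real^'n) set" where
  "unit_cube r = {V. \<forall>i. r \<le> V $ i \<and> V $ i \<le> 1}"

text \<open>Upper-transition time (steady state y_infinity = 0 below threshold):
  the least t \<ge> 0 such that |y(t) - 0| \<le> r for every initial condition with
  all v_i(0) in [r,1].\<close>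
definition upper_T :: "real^'n^'n \<Rightarrow> real \<Rightarrow> real \<Rightarrow> real" where
  "upper_T A tau r = Inf {t. t \<ge> 0 \<and>
     (\<forall>V0 \<in> unit_cube r. \<forall>v. nimfa_solution A tau V0 v \<longrightarrow> \<bar>prevalence v t - 0\<bar> \<le> r)}"

end

theory Submission
  imports Defs
begin


lemma gronwall0:
  fixes phi phi' :: "real \<Rightarrow> real"
  assumes T: "0 \<le> T"
  and d: "\<And>t. 0 \<le> t \<Longrightarrow> t \<le> T \<Longrightarrow> (phi has_real_derivative phi' t) (at t within {0..})"
  and b: "\<And>t. 0 \<le> t \<Longrightarrow> t \<le> T \<Longrightarrow> phi' t \<le> K * phi t"
  shows "phi T \<le> exp (K*T) * phi 0"
proof -
  define psi where "psi t = exp (-K*t) * phi t" for t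
  have dpsi: "(psi has_real_derivative (exp (-K*t) * phi' t + (-K) * exp (-K*t) * phi t)) (at t within {0..})"
    if "0 \<le> t" "t \<le> T" for t
  proof -
    have e: "((\<lambda>t. exp (-K*t)) has_real_derivative (exp (-K*t) * (-K))) (at t within {0..})"
      by (auto intro!: derivative_eq_intros)
    show ?thesis unfolding psi_def
      using DERIV_mult[OF e d[OF that]] by (simp add: algebra_simps)
  qed
  have "psi T \<le> psi 0"
  proof (rule DERIV_nonpos_imp_decreasing_open[OF T])
    fix x assume x: "0 < x" "x < T"
    have "at x within {0..} = at x"
      by (rule at_within_interior) (use x in auto)
    then have "(psi has_real_derivative (exp (-K*x) * phi' x + (-K) * exp (-K*x) * phi x)) (at x)"
      using dpsi[of x] x by simp
    moreover have "exp (-K*x) * phi' x + (-K) * exp (-K*x) * phi x \<le> 0"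
    proof -
      have "exp (-K*x) * phi' x \<le> exp (-K*x) * (K * phi x)"
        using b[of x] x by (intro mult_left_mono) auto
      then show ?thesis by (simp add: algebra_simps)
    qed
    ultimately show "\<exists>y. (psi has_real_derivative y) (at x) \<and> y \<le> 0" by blast
  next
    show "continuous_on {0..T} psi"
      by (rule DERIV_continuous_on[where D="\<lambda>t. exp (-K*t) * phi' t + (-K) * exp (-K*t) * phi t"])
         (use DERIV_subset[OF dpsi] in force)
  qed
  then have "exp (-K*T) * phi T \<le> phi 0" by (simp add: psi_def)
  then have "exp (K*T) * (exp (-K*T) * phi T) \<le> exp (K*T) * phi 0"
    by (intro mult_left_mono) auto
  then show ?thesis by (simp add: exp_minus field_simps)
qed

lemma pos_sq_ineq:
  fixes x y :: real
  shows "\<bar>(max y 0)^2 - (max x 0)^2 - 2 * max x 0 * (y - x)\<bar> \<le> (y - x)^2"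
proof (cases "0 \<le> x")
  case True
  show ?thesis
  proof (cases "0 \<le> y")
    case True
    have "(max y 0)^2 - (max x 0)^2 - 2 * max x 0 * (y - x) = (y - x)^2"
      using True \<open>0 \<le> x\<close> by (simp add: max_absorb1 power2_eq_square algebra_simps)
    then show ?thesis by simp
  next
    case False
    have e: "(max y 0)^2 - (max x 0)^2 - 2 * max x 0 * (y - x) = x*x - 2*x*y"
      using False \<open>0 \<le> x\<close> by (simp add: max_absorb1 max_absorb2 power2_eq_square algebra_simps)
    have "x * y \<le> 0" using False \<open>0 \<le> x\<close> by (simp add: mult_nonneg_nonpos)
    moreover have "0 \<le> x * x" by simp
    moreover have "0 \<le> y * y" by simp
    ultimately have a: "\<bar>x*x - 2*x*y\<bar> = x*x - 2*x*y" "x*x - 2*x*y \<le> (y - x)^2"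
      by (intro abs_of_nonneg, linarith) (simp add: power2_eq_square algebra_simps)
    show ?thesis unfolding e a(1) by (rule a(2))
  qed
next
  case False
  show ?thesis
  proof (cases "0 \<le> y")
    case True
    have e: "(max y 0)^2 - (max x 0)^2 - 2 * max x 0 * (y - x) = y*y"
      using True False by (simp add: max_absorb1 max_absorb2 power2_eq_square)
    have "x * y \<le> 0" using False True by (simp add: mult_nonpos_nonneg)
    moreover have "0 \<le> x * x" by simp
    moreover have "(y - x)^2 = y*y - 2*x*y + x*x" by (simp add: power2_eq_square algebra_simps)
    moreover have "\<bar>y*y\<bar> = y*y" by simp
    ultimately show ?thesis unfolding e by linarith
  next
    case False
    then show ?thesis using \<open>\<not> 0 \<le> x\<close> by (simp add: max_absorb2)
  qed
qed

lemma pos_sq_deriv: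
  "((\<lambda>x::real. (max x 0)^2) has_real_derivative (2 * max x 0)) (at x)"
proof -
  have "((\<lambda>y. ((max y 0)^2 - (max x 0)^2) / (y - x) - 2 * max x 0) \<longlongrightarrow> 0) (at x)"
  proof (rule Lim_null_comparison)
    have "norm (((max y 0)^2 - (max x 0)^2) / (y - x) - 2 * max x 0) \<le> \<bar>y - x\<bar>" if "y \<noteq> x" for y
    proof -
      have "((max y 0)^2 - (max x 0)^2) / (y - x) - 2 * max x 0
          = ((max y 0)^2 - (max x 0)^2 - 2 * max x 0 * (y - x)) / (y - x)"
        using that by (simp add: field_simps)
      also have "norm \<dots> = \<bar>(max y 0)^2 - (max x 0)^2 - 2 * max x 0 * (y - x)\<bar> / \<bar>y - x\<bar>"
        by (simp add: abs_divide)
      also have "\<dots> \<le> (y - x)^2 / \<bar>y - x\<bar>"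
        by (intro divide_right_mono pos_sq_ineq) auto
      also have "\<dots> = \<bar>y - x\<bar>"
      proof -
        have "(y - x)^2 = \<bar>y - x\<bar> * \<bar>y - x\<bar>" by (metis abs_mult_self_eq power2_eq_square)
        moreover have "\<bar>y - x\<bar> \<noteq> 0" using that by simp
        ultimately show ?thesis by (metis nonzero_mult_div_cancel_right)
      qed
      finally show ?thesis .
    qed
    then show "\<forall>\<^sub>F y in at x. norm (((max y 0)^2 - (max x 0)^2) / (y - x) - 2 * max x 0) \<le> \<bar>y - x\<bar>"
      by (auto simp: eventually_at_filter)
    show "((\<lambda>y. \<bar>y - x\<bar>) \<longlongrightarrow> 0) (at x)"
      by (intro tendsto_eq_intros) auto
  qed
  then show ?thesis
    by (simp add: has_field_derivative_iff LIM_zero_iff)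
qed




lemma sym_inner:
  fixes A :: "real^'n^'n"
  assumes "\<forall>i j. A$i$j = A$j$i"
  shows "x \<bullet> (A *v y) = y \<bullet> (A *v x)"
proof -
  have "x \<bullet> (A *v y) = (\<Sum>i\<in>UNIV. \<Sum>j\<in>UNIV. x$i * A$i$j * y$j)"
    by (simp add: inner_vec_def matrix_vector_mult_def sum_distrib_left mult.assoc)
  also have "\<dots> = (\<Sum>j\<in>UNIV. \<Sum>i\<in>UNIV. x$i * A$i$j * y$j)" by (rule sum.swap)
  also have "\<dots> = y \<bullet> (A *v x)"
    unfolding inner_vec_def matrix_vector_mult_def
    apply (simp add: sum_distrib_left)
    apply (rule sum.cong[OF refl])
    apply (rule sum.cong[OF refl])
    using assms by (metis mult.commute mult.left_commute)
  finally show ?thesis .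
qed

lemma eig_finite:
  fixes A :: "real^'n^'n"
  assumes sym: "\<forall>i j. A$i$j = A$j$i"
  shows "finite {l. \<exists>x. x \<noteq> 0 \<and> A *v x = l *\<^sub>R x}"
proof -
  define E where "E = {l. \<exists>x. x \<noteq> 0 \<and> A *v x = l *\<^sub>R x}"
  define ev where "ev l = (SOME x. x \<noteq> 0 \<and> A *v x = l *\<^sub>R x)" for l
  have ev: "ev l \<noteq> 0 \<and> A *v ev l = l *\<^sub>R ev l" if "l \<in> E" for l
    using that unfolding E_def ev_def by (metis (mono_tags, lifting) mem_Collect_eq someI_ex)
  have inj: "inj_on ev E"
  proof (rule inj_onI)
    fix l m assume "l \<in> E" "m \<in> E" "ev l = ev m"
    then have "l *\<^sub>R ev l = m *\<^sub>R ev l" "ev l \<noteq> 0" using ev by metis+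
    then show "l = m" by (simp add: scaleR_cancel_right)
  qed
  have "pairwise orthogonal (ev ` E)"
  proof (auto simp: pairwise_def)
    fix l m assume lm: "l \<in> E" "m \<in> E" "ev l \<noteq> ev m"
    then have "l \<noteq> m" by auto
    have "ev l \<bullet> (A *v ev m) = ev m \<bullet> (A *v ev l)" by (rule sym_inner[OF sym])
    then have "m * (ev l \<bullet> ev m) = l * (ev l \<bullet> ev m)"
      using ev[OF lm(1)] ev[OF lm(2)] by (simp add: inner_commute)
    then show "orthogonal (ev l) (ev m)" using \<open>l \<noteq> m\<close> by (simp add: orthogonal_def)
  qed
  moreover have "0 \<notin> ev ` E" using ev by auto
  ultimately have "independent (ev ` E)" by (rule pairwise_orthogonal_independent)
  then have "finite (ev ` E)" by (rule independent_imp_finite)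
  then show ?thesis using inj finite_imageD E_def by blast
qed

lemma rayleigh:
  fixes A :: "real^'n^'n"
  assumes sym: "\<forall>i j. A$i$j = A$j$i"
  shows "x \<bullet> (A *v x) \<le> lambda1 A * (x \<bullet> x)"
proof -
  define f where "f y = y \<bullet> (A *v y)" for y :: "real^'n"
  have cont: "continuous_on (sphere 0 1) f"
    unfolding f_def by (intro continuous_intros linear_continuous_on matrix_vector_mul_bounded_linear)
  obtain x0 where x0: "x0 \<in> sphere 0 1" "\<And>y. y \<in> sphere 0 1 \<Longrightarrow> f y \<le> f x0"
    using continuous_attains_sup[OF compact_sphere _ cont] by auto
  define M where "M = f x0"
  have fsc: "f (c *\<^sub>R y) = c^2 * f y" for c y
    by (simp add: f_def algebra_simps power2_eq_square)
  have bnd: "f y \<le> M * (y \<bullet> y)" for y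
  proof (cases "y = 0")
    case True then show ?thesis by (simp add: f_def)
  next
    case False
    define c where "c = norm y"
    have c: "c > 0" using False by (simp add: c_def)
    have "(1/c) *\<^sub>R y \<in> sphere 0 1" using c by (simp add: c_def)
    then have "f ((1/c) *\<^sub>R y) \<le> M" using x0(2) M_def by blast
    then have "f y / c^2 \<le> M" by (simp add: fsc field_simps)
    then have "f y \<le> M * c^2" using c by (simp add: field_simps)
    then show ?thesis by (simp add: c_def power2_norm_eq_inner)
  qed
  have x0n: "x0 \<bullet> x0 = 1" using x0(1) by (simp add: power2_norm_eq_inner[symmetric])
  define z where "z = A *v x0 - M *\<^sub>R x0"
  define c where "c = z \<bullet> z"
  define d where "d = M * (z \<bullet> z) - f z"
  have d0: "0 \<le> d" using bnd[of z] by (simp add: d_def)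
  have key: "0 \<le> - 2 * t * c + t^2 * d" for t
  proof -
    have "f (x0 + t *\<^sub>R z) \<le> M * ((x0 + t *\<^sub>R z) \<bullet> (x0 + t *\<^sub>R z))" by (rule bnd)
    moreover have "x0 \<bullet> (A *v z) = z \<bullet> (A *v x0)" by (rule sym_inner[OF sym])
    moreover have "z \<bullet> (A *v x0) = c + M * (z \<bullet> x0)"
      by (simp add: c_def z_def inner_diff_left inner_diff_right algebra_simps)
    moreover have "x0 \<bullet> (A *v x0) = M" by (simp add: M_def f_def)
    ultimately show ?thesis
      by (simp add: f_def d_def M_def[symmetric] algebra_simps inner_add_left inner_add_right
           x0n inner_commute power2_eq_square c_def[symmetric])
  qed
  have "c = 0"
  proof -
    have c0: "0 \<le> c" by (simp add: c_def)
    have "0 \<le> - 2 * (c/(d+1)) * c + (c/(d+1))^2 * d" by (rule key)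
    then have "0 \<le> (d+1)^2 * (- 2 * (c/(d+1)) * c + (c/(d+1))^2 * d)" by simp
    also have "(d+1)^2 * (- 2 * (c/(d+1)) * c + (c/(d+1))^2 * d) = - 2 * c * c * (d+1) + c^2 * d"
    proof -
      have "d + 1 \<noteq> 0" using d0 by linarith
      then show ?thesis by (simp add: power2_eq_square divide_simps)
    qed
    finally have "0 \<le> - 2 * c * c * (d+1) + c^2 * d" .
    then have "c^2 * (d + 2) \<le> 0" by (simp add: algebra_simps power2_eq_square)
    then have "c^2 \<le> 0" using d0 by (simp add: mult_le_0_iff)
    then show ?thesis by simp
  qed
  then have "A *v x0 = M *\<^sub>R x0" by (simp add: c_def z_def)
  moreover have "x0 \<noteq> 0" using x0n by auto
  ultimately have "M \<in> {l. \<exists>x. x \<noteq> 0 \<and> A *v x = l *\<^sub>R x}" by auto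
  then have "M \<le> lambda1 A" unfolding lambda1_def by (rule Max_ge[OF eig_finite[OF sym]])
  then have "M * (x \<bullet> x) \<le> lambda1 A * (x \<bullet> x)" by (intro mult_right_mono) auto
  with bnd[of x] show ?thesis by (simp add: f_def)
qed




lemma possq_zero:
  fixes u :: "real \<Rightarrow> 'i::finite \<Rightarrow> real"
  assumes T: "0 \<le> T"
  and d: "\<And>t i. 0 \<le> t \<Longrightarrow> t \<le> T \<Longrightarrow> ((\<lambda>s. u s i) has_real_derivative u' t i) (at t within {0..})"
  and b: "\<And>t. 0 \<le> t \<Longrightarrow> t \<le> T \<Longrightarrow>
           (\<Sum>i\<in>UNIV. 2 * max (u t i) 0 * u' t i) \<le> K * (\<Sum>i\<in>UNIV. (max (u t i) 0)^2)"
  and z: "\<And>i. u 0 i \<le> 0"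
  shows "u T i \<le> 0"
proof -
  define phi where "phi t = (\<Sum>i\<in>UNIV. (max (u t i) 0)^2)" for t
  have dphi: "(phi has_real_derivative (\<Sum>i\<in>UNIV. 2 * max (u t i) 0 * u' t i)) (at t within {0..})"
    if "0 \<le> t" "t \<le> T" for t
    unfolding phi_def
  proof (rule DERIV_sum)
    fix i :: 'i
    show "((\<lambda>s. (max (u s i) 0)^2) has_real_derivative 2 * max (u t i) 0 * u' t i) (at t within {0..})"
      using DERIV_chain2[OF pos_sq_deriv d[OF that, of i]] by simp
  qed
  have "phi T \<le> exp (K*T) * phi 0"
    by (rule gronwall0[OF T dphi]) (use b phi_def in auto)
  moreover have "phi 0 = 0" using z by (simp add: phi_def max_def)
  ultimately have "phi T \<le> 0" by simp
  moreover have "(max (u T i) 0)^2 \<le> phi T"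
    unfolding phi_def by (rule member_le_sum) auto
  ultimately have "(max (u T i) 0)^2 \<le> 0" by linarith
  then show ?thesis by (simp add: max_def split: if_splits)
qed

lemma sol_bound:
  fixes v :: "real \<Rightarrow> real^'n"
  assumes sol: "nimfa_solution A tau V0 v" and T: "0 \<le> T"
  shows "\<exists>B. \<forall>t. 0 \<le> t \<longrightarrow> t \<le> T \<longrightarrow> (\<forall>i. \<bar>v t $ i\<bar> \<le> B)"
proof -
  have "\<exists>B. \<forall>t\<in>{0..T}. \<bar>v t $ i\<bar> \<le> B" for i
  proof -
    have "continuous_on {0..T} (\<lambda>s. v s $ i)"
    proof (rule DERIV_continuous_on)
      fix x assume "x \<in> {0..T}"
      then show "((\<lambda>s. v s $ i) has_real_derivative
         (- v x $ i + tau * (1 - v x $ i) * (\<Sum>j\<in>UNIV. A $ i $ j * v x $ j))) (at x within {0..T})"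
        using sol unfolding nimfa_solution_def by (meson DERIV_subset atLeastAtMost_iff atLeast_iff subsetI)
    qed
    then have "compact ((\<lambda>s. v s $ i) ` {0..T})" by (rule compact_continuous_image[OF _ compact_Icc])
    then have "bounded ((\<lambda>s. v s $ i) ` {0..T})" by (rule compact_imp_bounded)
    then show ?thesis by (auto simp: bounded_iff)
  qed
  then obtain B where B: "\<And>i. \<forall>t\<in>{0..T}. \<bar>v t $ i\<bar> \<le> B i" by metis
  have "\<bar>v t $ i\<bar> \<le> (\<Sum>j\<in>UNIV. \<bar>B j\<bar>)" if "0 \<le> t" "t \<le> T" for t i
  proof -
    have "\<bar>v t $ i\<bar> \<le> \<bar>B i\<bar>" using B[of i] that by force
    also have "\<dots> \<le> (\<Sum>j\<in>UNIV. \<bar>B j\<bar>)" by (rule member_le_sum) auto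
    finally show ?thesis .
  qed
  then show ?thesis by blast
qed




lemma adj01: "simple_graph_adj A \<Longrightarrow> A$i$j = 0 \<or> A$i$j = 1"
  by (simp add: simple_graph_adj_def)

lemma sol_deriv:
  "nimfa_solution A tau V0 v \<Longrightarrow> 0 \<le> t \<Longrightarrow>
   ((\<lambda>s. v s $ i) has_real_derivative
         (- v t $ i + tau * (1 - v t $ i) * (\<Sum>j\<in>UNIV. A $ i $ j * v t $ j))) (at t within {0..})"
  by (simp add: nimfa_solution_def)

lemma sol_nonneg:
  fixes A :: "real^'n^'n" and v :: "real \<Rightarrow> real^'n"
  assumes G: "simple_graph_adj A" and tau: "0 \<le> tau" and sol: "nimfa_solution A tau V0 v"
    and V0: "\<forall>i. 0 \<le> V0$i" and t: "0 \<le> t"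
  shows "0 \<le> v t $ i"
proof -
  obtain B where B: "\<And>s i. 0 \<le> s \<Longrightarrow> s \<le> t \<Longrightarrow> \<bar>v s $ i\<bar> \<le> B"
    using sol_bound[OF sol t] by blast
  define K where "K = 2 * tau * (1 + B) * real CARD('n)"
  have "(\<lambda>s i. - (v s $ i)) t i \<le> 0"
  proof (rule possq_zero[OF t])
    fix s i assume s: "0 \<le> s" "s \<le> t"
    show "((\<lambda>s. - (v s $ i)) has_real_derivative
      - (- v s $ i + tau * (1 - v s $ i) * (\<Sum>j\<in>UNIV. A $ i $ j * v s $ j))) (at s within {0..})"
      using sol_deriv[OF sol s(1)] by (rule DERIV_minus)
  next
    fix s assume s: "0 \<le> s" "s \<le> t"
    define n where "n j = max (- (v s $ j)) 0" for j
    have n0: "0 \<le> n j" for j by (simp add: n_def)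
    have B0: "0 \<le> B" using B[OF s, of i] by linarith
    have per: "max (- (v s $ i)) 0 * (- (- v s $ i + tau * (1 - v s $ i) * (\<Sum>j\<in>UNIV. A $ i $ j * v s $ j)))
        \<le> tau * (1 + B) * (n i * (\<Sum>j\<in>UNIV. n j))" for i
    proof (cases "0 \<le> v s $ i")
      case True
      then show ?thesis using n0 B0 tau by (simp add: n_def sum_nonneg)
    next
      case False
      define S where "S = (\<Sum>j\<in>UNIV. A $ i $ j * v s $ j)"
      have "(\<Sum>j\<in>UNIV. - n j) \<le> S" unfolding S_def
      proof (rule sum_mono)
        fix j show "- n j \<le> A $ i $ j * v s $ j"
          using adj01[OF G, of i j] n0[of j] by (auto simp: n_def)
      qed
      then have S: "- S \<le> (\<Sum>j\<in>UNIV. n j)" by (simp add: sum_negf)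
      have ni: "n i = - v s $ i" using False by (simp add: n_def)
      have vi: "1 - v s $ i \<le> 1 + B" using B[OF s, of i] by linarith
      have "max (- (v s $ i)) 0 * (- (- v s $ i + tau * (1 - v s $ i) * S))
          = - (n i * n i) + tau * (n i * (1 - v s $ i)) * (- S)"
        using ni by (simp add: n_def[symmetric] algebra_simps)
      also have "\<dots> \<le> tau * (n i * (1 - v s $ i)) * (- S)" by simp
      also have "\<dots> \<le> tau * (n i * (1 - v s $ i)) * (\<Sum>j\<in>UNIV. n j)"
        using S tau n0[of i] False by (intro mult_left_mono) auto
      also have "\<dots> \<le> tau * (n i * (1 + B)) * (\<Sum>j\<in>UNIV. n j)"
        using vi tau n0 by (intro mult_right_mono mult_left_mono sum_nonneg) auto
      finally show ?thesis by (simp add: S_def algebra_simps)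
    qed
    have "(\<Sum>i\<in>UNIV. 2 * max (- v s $ i) 0 *
            - (- v s $ i + tau * (1 - v s $ i) * (\<Sum>j\<in>UNIV. A $ i $ j * v s $ j)))
        \<le> (\<Sum>i\<in>UNIV. 2 * (tau * (1 + B) * (n i * (\<Sum>j\<in>UNIV. n j))))"
      by (rule sum_mono) (use per in \<open>simp add: mult.assoc\<close>)
    also have "\<dots> = 2 * tau * (1 + B) * (\<Sum>i\<in>UNIV. n i)^2"
      by (simp add: sum_distrib_left sum_distrib_right power2_eq_square mult_ac)
    also have "\<dots> \<le> 2 * tau * (1 + B) * ((\<Sum>i\<in>UNIV. (n i)^2) * real CARD('n))"
      using tau B0 by (intro mult_left_mono sum_squared_le_sum_of_squares) auto
    also have "\<dots> = K * (\<Sum>i\<in>UNIV. (max (- v s $ i) 0)^2)"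
      by (simp add: K_def n_def)
    finally show "(\<Sum>i\<in>UNIV. 2 * max (- v s $ i) 0 *
            - (- v s $ i + tau * (1 - v s $ i) * (\<Sum>j\<in>UNIV. A $ i $ j * v s $ j)))
        \<le> K * (\<Sum>i\<in>UNIV. (max (- v s $ i) 0)^2)" .
  next
    fix i show "- (v 0 $ i) \<le> 0" using V0 sol by (simp add: nimfa_solution_def)
  qed
  then show ?thesis by simp
qed




lemma sol_le1:
  fixes A :: "real^'n^'n" and v :: "real \<Rightarrow> real^'n"
  assumes G: "simple_graph_adj A" and tau: "0 \<le> tau" and sol: "nimfa_solution A tau V0 v"
    and V0: "\<forall>i. 0 \<le> V0$i \<and> V0$i \<le> 1" and t: "0 \<le> t"
  shows "v t $ i \<le> 1"
proof -
  have nn: "0 \<le> v s $ j" if "0 \<le> s" for s j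
    using sol_nonneg[OF G tau sol _ that] V0 by blast
  have "(\<lambda>s i. v s $ i - 1) t i \<le> 0"
  proof (rule possq_zero[OF t, where K=0])
    fix s i assume s: "0 \<le> s" "s \<le> t"
    show "((\<lambda>s. v s $ i - 1) has_real_derivative
      (- v s $ i + tau * (1 - v s $ i) * (\<Sum>j\<in>UNIV. A $ i $ j * v s $ j))) (at s within {0..})"
      using DERIV_diff[OF sol_deriv[OF sol s(1)] DERIV_const[of 1]] by simp
  next
    fix s assume s: "0 \<le> s" "s \<le> t"
    have per: "2 * max (v s $ i - 1) 0 * (- v s $ i + tau * (1 - v s $ i) * (\<Sum>j\<in>UNIV. A $ i $ j * v s $ j)) \<le> 0" for i
    proof (cases "v s $ i \<le> 1")
      case True then show ?thesis by simp
    next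
      case False
      have S: "0 \<le> (\<Sum>j\<in>UNIV. A $ i $ j * v s $ j)"
        using adj01[OF G] nn[OF s(1)] by (intro sum_nonneg) (metis mult_eq_0_iff mult_1 order_refl)
      have "tau * (1 - v s $ i) * (\<Sum>j\<in>UNIV. A $ i $ j * v s $ j) \<le> 0"
        using False tau S by (intro mult_nonpos_nonneg mult_nonneg_nonpos) auto
      then have "(- v s $ i + tau * (1 - v s $ i) * (\<Sum>j\<in>UNIV. A $ i $ j * v s $ j)) \<le> 0"
        using nn[OF s(1), of i] by linarith
      moreover have "0 \<le> 2 * max (v s $ i - 1) 0" by simp
      ultimately show ?thesis by (metis mult_nonneg_nonpos)
    qed
    show "(\<Sum>i\<in>UNIV. 2 * max (v s $ i - 1) 0 * (- v s $ i + tau * (1 - v s $ i) * (\<Sum>j\<in>UNIV. A $ i $ j * v s $ j)))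
        \<le> 0 * (\<Sum>i\<in>UNIV. (max (v s $ i - 1) 0)^2)"
      using per by (simp add: sum_nonpos)
  next
    fix i show "v 0 $ i - 1 \<le> 0" using V0 sol by (simp add: nimfa_solution_def)
  qed
  then show ?thesis by simp
qed

lemma sol_cmp:
  fixes A :: "real^'n^'n" and v w :: "real \<Rightarrow> real^'n"
  assumes G: "simple_graph_adj A" and tau: "0 \<le> tau"
    and solv: "nimfa_solution A tau V0 v" and solw: "nimfa_solution A tau W0 w"
    and V0: "\<forall>i. 0 \<le> V0$i \<and> V0$i \<le> 1" and W0: "\<forall>i. 0 \<le> W0$i \<and> W0$i \<le> 1"
    and VW: "\<forall>i. V0$i \<le> W0$i" and t: "0 \<le> t"
  shows "v t $ i \<le> w t $ i"
proof -
  have nnv: "0 \<le> v s $ j" if "0 \<le> s" for s j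
    using sol_nonneg[OF G tau solv _ that] V0 by blast
  have w1: "0 \<le> w s $ j \<and> w s $ j \<le> 1" if "0 \<le> s" for s j
    using sol_nonneg[OF G tau solw _ that] sol_le1[OF G tau solw W0 that] W0 by blast
  define K where "K = 2 * tau * real CARD('n)"
  have "(\<lambda>s i. v s $ i - w s $ i) t i \<le> 0"
  proof (rule possq_zero[OF t, where K=K])
    fix s i assume s: "0 \<le> s" "s \<le> t"
    show "((\<lambda>s. v s $ i - w s $ i) has_real_derivative
      (- v s $ i + tau * (1 - v s $ i) * (\<Sum>j\<in>UNIV. A $ i $ j * v s $ j))
      - (- w s $ i + tau * (1 - w s $ i) * (\<Sum>j\<in>UNIV. A $ i $ j * w s $ j))) (at s within {0..})"
      using DERIV_diff[OF sol_deriv[OF solv s(1)] sol_deriv[OF solw s(1)]] by simp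
  next
    fix s assume s: "0 \<le> s" "s \<le> t"
    define p where "p j = max (v s $ j - w s $ j) 0" for j
    have p0: "0 \<le> p j" for j by (simp add: p_def)
    have per: "max (v s $ i - w s $ i) 0 * ((- v s $ i + tau * (1 - v s $ i) * (\<Sum>j\<in>UNIV. A $ i $ j * v s $ j))
      - (- w s $ i + tau * (1 - w s $ i) * (\<Sum>j\<in>UNIV. A $ i $ j * w s $ j)))
        \<le> tau * (p i * (\<Sum>j\<in>UNIV. p j))" for i
    proof (cases "v s $ i \<le> w s $ i")
      case True
      then show ?thesis using p0 tau by (simp add: p_def sum_nonneg)
    next
      case False
      define Sv where "Sv = (\<Sum>j\<in>UNIV. A $ i $ j * v s $ j)"
      define Sw where "Sw = (\<Sum>j\<in>UNIV. A $ i $ j * w s $ j)"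
      have Sv0: "0 \<le> Sv" unfolding Sv_def
        using adj01[OF G] nnv[OF s(1)] by (intro sum_nonneg) (metis mult_eq_0_iff mult_1 order_refl)
      have "Sv - Sw = (\<Sum>j\<in>UNIV. A $ i $ j * (v s $ j - w s $ j))"
        by (simp add: Sv_def Sw_def sum_subtractf algebra_simps)
      also have "\<dots> \<le> (\<Sum>j\<in>UNIV. p j)"
      proof (rule sum_mono)
        fix j show "A $ i $ j * (v s $ j - w s $ j) \<le> p j"
          using adj01[OF G, of i j] p0[of j] by (auto simp: p_def)
      qed
      finally have D: "Sv - Sw \<le> (\<Sum>j\<in>UNIV. p j)" .
      have pi: "p i = v s $ i - w s $ i" using False by (simp add: p_def)
      have wi: "0 \<le> 1 - w s $ i" "1 - w s $ i \<le> 1" using w1[OF s(1), of i] by auto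
      have pp: "0 \<le> p i" "0 \<le> (\<Sum>j\<in>UNIV. p j)" using p0 by (auto intro: sum_nonneg)
      have "max (v s $ i - w s $ i) 0 * ((- v s $ i + tau * (1 - v s $ i) * Sv) - (- w s $ i + tau * (1 - w s $ i) * Sw))
          = - (p i * p i) + tau * (p i * (1 - w s $ i)) * (Sv - Sw) - tau * (p i * p i) * Sv"
        using False by (simp add: max_def pi algebra_simps)
      also have "\<dots> \<le> tau * (p i * (1 - w s $ i)) * (Sv - Sw)"
      proof -
        have "0 \<le> tau * (p i * p i) * Sv" using tau Sv0 by simp
        moreover have "0 \<le> p i * p i" by simp
        ultimately show ?thesis by linarith
      qed
      also have "\<dots> \<le> tau * (p i * (1 - w s $ i)) * (\<Sum>j\<in>UNIV. p j)"
        using D tau pp wi by (intro mult_left_mono) auto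
      also have "\<dots> \<le> tau * (p i * 1) * (\<Sum>j\<in>UNIV. p j)"
        using tau pp wi by (intro mult_right_mono mult_left_mono) auto
      finally show ?thesis by (simp add: Sv_def Sw_def algebra_simps)
    qed
    have "(\<Sum>i\<in>UNIV. 2 * max (v s $ i - w s $ i) 0 * ((- v s $ i + tau * (1 - v s $ i) * (\<Sum>j\<in>UNIV. A $ i $ j * v s $ j))
      - (- w s $ i + tau * (1 - w s $ i) * (\<Sum>j\<in>UNIV. A $ i $ j * w s $ j))))
        \<le> (\<Sum>i\<in>UNIV. 2 * (tau * (p i * (\<Sum>j\<in>UNIV. p j))))"
      by (rule sum_mono) (use per in \<open>simp add: mult.assoc\<close>)
    also have "\<dots> = 2 * tau * (\<Sum>i\<in>UNIV. p i)^2"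
      by (simp add: sum_distrib_left sum_distrib_right power2_eq_square mult_ac)
    also have "\<dots> \<le> 2 * tau * ((\<Sum>i\<in>UNIV. (p i)^2) * real CARD('n))"
      using tau by (intro mult_left_mono sum_squared_le_sum_of_squares) auto
    also have "\<dots> = K * (\<Sum>i\<in>UNIV. (max (v s $ i - w s $ i) 0)^2)"
      by (simp add: K_def p_def)
    finally show "(\<Sum>i\<in>UNIV. 2 * max (v s $ i - w s $ i) 0 * ((- v s $ i + tau * (1 - v s $ i) * (\<Sum>j\<in>UNIV. A $ i $ j * v s $ j))
      - (- w s $ i + tau * (1 - w s $ i) * (\<Sum>j\<in>UNIV. A $ i $ j * w s $ j))))
        \<le> K * (\<Sum>i\<in>UNIV. (max (v s $ i - w s $ i) 0)^2)" .
  next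
    fix i show "v 0 $ i - w 0 $ i \<le> 0" using VW solv solw by (simp add: nimfa_solution_def)
  qed
  then show ?thesis by simp
qed




lemma sol_lyap:
  fixes A :: "real^'n^'n" and v :: "real \<Rightarrow> real^'n"
  assumes G: "simple_graph_adj A" and tau: "0 \<le> tau" and sol: "nimfa_solution A tau V0 v"
    and V0: "\<forall>i. 0 \<le> V0$i \<and> V0$i \<le> 1" and t: "0 \<le> t"
  shows "prevalence v t \<le> exp ((R0 A tau - 1) * t)"
proof -
  have nn: "0 \<le> v s $ j" if "0 \<le> s" for s j
    using sol_nonneg[OF G tau sol _ that] V0 by blast
  have sym: "\<forall>i j. A$i$j = A$j$i" using G by (simp add: simple_graph_adj_def)
  define F where "F s i = - v s $ i + tau * (1 - v s $ i) * (\<Sum>j\<in>UNIV. A $ i $ j * v s $ j)" for s i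
  define phi where "phi s = (\<Sum>i\<in>UNIV. v s $ i * v s $ i)" for s
  define K where "K = 2 * (R0 A tau - 1)"
  have "phi t \<le> exp (K * t) * phi 0"
  proof (rule gronwall0[OF t])
    fix s :: real assume s: "0 \<le> s" "s \<le> t"
    show "(phi has_real_derivative (\<Sum>i\<in>UNIV. F s i * v s $ i + v s $ i * F s i)) (at s within {0..})"
      unfolding phi_def
    proof (rule DERIV_sum)
      fix i
      show "((\<lambda>x. v x $ i * v x $ i) has_real_derivative F s i * v s $ i + v s $ i * F s i) (at s within {0..})"
        using DERIV_mult[OF sol_deriv[OF sol s(1), of i] sol_deriv[OF sol s(1), of i]] by (simp add: F_def)
    qed
    have per: "v s $ i * F s i \<le> - (v s $ i * v s $ i) + tau * (v s $ i * (\<Sum>j\<in>UNIV. A $ i $ j * v s $ j))" for i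
    proof -
      have S0: "0 \<le> (\<Sum>j\<in>UNIV. A $ i $ j * v s $ j)"
        using adj01[OF G] nn[OF s(1)] by (intro sum_nonneg) (metis mult_eq_0_iff mult_1 order_refl)
      have "0 \<le> tau * (v s $ i * v s $ i) * (\<Sum>j\<in>UNIV. A $ i $ j * v s $ j)" using tau S0 by simp
      then show ?thesis by (simp add: F_def algebra_simps)
    qed
    have ip: "(\<Sum>i\<in>UNIV. v s $ i * (\<Sum>j\<in>UNIV. A $ i $ j * v s $ j)) = v s \<bullet> (A *v v s)"
      by (simp add: inner_vec_def matrix_vector_mult_def)
    have ii: "v s \<bullet> v s = phi s" by (simp add: inner_vec_def phi_def)
    have "(\<Sum>i\<in>UNIV. F s i * v s $ i + v s $ i * F s i) = 2 * (\<Sum>i\<in>UNIV. v s $ i * F s i)"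
      by (simp add: sum.distrib mult.commute sum_distrib_left)
    also have "\<dots> \<le> 2 * (\<Sum>i\<in>UNIV. - (v s $ i * v s $ i) + tau * (v s $ i * (\<Sum>j\<in>UNIV. A $ i $ j * v s $ j)))"
      using per by (intro mult_left_mono sum_mono) auto
    also have "\<dots> = 2 * (- phi s + tau * (v s \<bullet> (A *v v s)))"
      by (simp only: sum.distrib sum_negf phi_def sum_distrib_left[symmetric] ip)
    also have "\<dots> \<le> 2 * (- phi s + tau * (lambda1 A * phi s))"
      using rayleigh[OF sym, of "v s"] tau ii by (intro mult_left_mono add_left_mono) auto
    also have "\<dots> = K * phi s" by (simp add: K_def R0_def algebra_simps)
    finally show "(\<Sum>i\<in>UNIV. F s i * v s $ i + v s $ i * F s i) \<le> K * phi s" .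
  qed
  moreover have "phi 0 \<le> real CARD('n)"
  proof -
    have "phi 0 \<le> (\<Sum>i\<in>(UNIV::'n set). 1)" unfolding phi_def
      using sol V0 by (intro sum_mono) (simp add: nimfa_solution_def mult_le_one)
    then show ?thesis by simp
  qed
  ultimately have ph: "phi t \<le> exp (K * t) * real CARD('n)"
    by (meson exp_ge_zero mult_left_mono order_trans)
  have "(\<Sum>i\<in>UNIV. v t $ i)^2 \<le> (\<Sum>i\<in>UNIV. (v t $ i)^2) * real CARD('n)"
    by (rule sum_squared_le_sum_of_squares)
  also have "\<dots> = phi t * real CARD('n)" by (simp add: phi_def power2_eq_square)
  also have "\<dots> \<le> exp (K * t) * real CARD('n) * real CARD('n)"
    using ph by (intro mult_right_mono) auto
  also have "\<dots> = (exp ((R0 A tau - 1) * t) * real CARD('n))^2"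
    by (simp add: K_def power2_eq_square exp_add[symmetric] algebra_simps)
  finally have "(\<Sum>i\<in>UNIV. v t $ i) \<le> exp ((R0 A tau - 1) * t) * real CARD('n)"
    by (rule power2_le_imp_le) simp
  then show ?thesis by (simp add: prevalence_def divide_le_eq)
qed

lemma prev_nonneg:
  fixes A :: "real^'n^'n" and v :: "real \<Rightarrow> real^'n"
  assumes G: "simple_graph_adj A" and tau: "0 \<le> tau" and sol: "nimfa_solution A tau V0 v"
    and V0: "\<forall>i. 0 \<le> V0$i" and t: "0 \<le> t"
  shows "0 \<le> prevalence v t"
  unfolding prevalence_def using sol_nonneg[OF G tau sol V0 t]
  by (intro divide_nonneg_nonneg sum_nonneg) auto

theorem lemma2:
  fixes A :: "real^'n^'n" and tau :: real
  assumes "simple_graph_adj A"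
    and "0 < tau" and "R0 A tau < 1"
  shows "(\<forall>V0 \<in> unit_cube 0. \<forall>v w t.
            nimfa_solution A tau V0 v \<longrightarrow> nimfa_solution A tau (\<chi> i. 1) w \<longrightarrow> 0 \<le> t \<longrightarrow>
              prevalence v t \<le> prevalence w t \<and>
              prevalence w t \<le> exp ((R0 A tau - 1) * t))
       \<and> (\<forall>r. 0 < r \<and> r < 1 \<longrightarrow> upper_T A tau r \<le> 1 / (1 - R0 A tau) * ln (1 / r))"
proof (intro conjI ballI allI impI)
  have G: "simple_graph_adj A" and tau: "0 \<le> tau" using assms by auto
  have W0: "\<forall>i. 0 \<le> ((\<chi> i. 1) :: real^'n) $ i \<and> ((\<chi> i. 1) :: real^'n) $ i \<le> 1" by simp
  {
    fix V0 :: "real^'n" and v w :: "real \<Rightarrow> real^'n" and t :: real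
    assume V0: "V0 \<in> unit_cube 0" and solv: "nimfa_solution A tau V0 v"
      and solw: "nimfa_solution A tau (\<chi> i. 1) w" and t: "0 \<le> t"
    have V0': "\<forall>i. 0 \<le> V0$i \<and> V0$i \<le> 1" using V0 by (simp add: unit_cube_def)
    have "(\<Sum>i\<in>UNIV. v t $ i) \<le> (\<Sum>i\<in>UNIV. w t $ i)"
      by (rule sum_mono, rule sol_cmp[OF G tau solv solw V0' W0 _ t]) (use V0' in simp)
    then show "prevalence v t \<le> prevalence w t"
      unfolding prevalence_def by (intro divide_right_mono) auto
    show "prevalence w t \<le> exp ((R0 A tau - 1) * t)"
      by (rule sol_lyap[OF G tau solw W0 t])
  }
  fix r :: real assume r: "0 < r \<and> r < 1"
  define T0 where "T0 = 1 / (1 - R0 A tau) * ln (1 / r)"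
  have T0: "0 \<le> T0" unfolding T0_def using r assms(3) by (intro mult_nonneg_nonneg) auto
  have eT: "exp ((R0 A tau - 1) * T0) = r"
  proof -
    have "(R0 A tau - 1) * T0 = ln r" unfolding T0_def using assms(3) r
      by (simp add: ln_div field_simps)
    then show ?thesis using r by simp
  qed
  have "T0 \<in> {t. t \<ge> 0 \<and>
     (\<forall>V0 \<in> unit_cube r. \<forall>v. nimfa_solution A tau V0 v \<longrightarrow> \<bar>prevalence v t - 0\<bar> \<le> r)}"
  proof (intro CollectI conjI T0 ballI allI impI)
    fix V0 :: "real^'n" and v assume V0: "V0 \<in> unit_cube r" and sol: "nimfa_solution A tau V0 v"
    have V0': "\<forall>i. 0 \<le> V0$i \<and> V0$i \<le> 1" using V0 r unfolding unit_cube_def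
      by (metis (no_types, lifting) less_le_not_le mem_Collect_eq order_trans)
    have "0 \<le> prevalence v T0" using prev_nonneg[OF G tau sol _ T0] V0' by blast
    moreover have "prevalence v T0 \<le> r" using sol_lyap[OF G tau sol V0' T0] eT by simp
    ultimately show "\<bar>prevalence v T0 - 0\<bar> \<le> r" by simp
  qed
  then show "upper_T A tau r \<le> 1 / (1 - R0 A tau) * ln (1 / r)"
    unfolding upper_T_def T0_def[symmetric]
    by (rule cInf_lower) (auto intro: bdd_belowI[where m=0])
qed


end
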